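(* A metrizable topological space $X$ is separable if and only if $C(X)$ has the countable sup property.
   Context: $C(X)$ is the vector lattice of all real-valued continuous functions on $X$ with the pointwise order. A vector lattice has the countable sup property if every nonempty subset possessing a supremum contains a countable subset with the same supremum. *)

theory Defs
  imports "HOL-Analysis.Analysis"
begin

text \<open>Functions are identified with
  their restriction to the topspace by requiring them to vanish outside it, so that
  the pointwise order on functions is exactly the pointwise order on X.\<close>
definition cont_funs :: "'a topology \<Rightarrow> ('a \<Rightarrow> real) set" where
  "cont_funs X = {f. continuous_map X euclideanreal f \<and> (\<forall>x. x \<notin> topspace X \<longrightarrow> f x = 0)}"

definition is_sup_in :: "'b::order set \<Rightarrow> 'b set \<Rightarrow> 'b \<Rightarrow> bool" where
  "is_sup_in L S s \<longleftrightarrow> s \<in> L \<and> (\<forall>f\<in>S. f \<le> s) \<and> (\<forall>u\<in>L. (\<forall>f\<in>S. f \<le> u) \<longrightarrow> s \<le> u)"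

definition countable_sup_property :: "'b::order set \<Rightarrow> bool" where
  "countable_sup_property L \<longleftrightarrow>
     (\<forall>S. S \<subseteq> L \<and> S \<noteq> {} \<longrightarrow>
        (\<forall>s. is_sup_in L S s \<longrightarrow> (\<exists>T. T \<subseteq> S \<and> countable T \<and> is_sup_in L T s)))"

end

theory Submission
  imports Defs
begin

context Metric_space
begin

lemma lip_cont:
  assumes K: "K > 0" and L: "\<And>x y. x \<in> M \<Longrightarrow> y \<in> M \<Longrightarrow> \<bar>f x - f y\<bar> \<le> K * d x y"
  shows "continuous_map mtopology euclideanreal f"
proof -
  have "continuous_map mtopology Met_TC.mtopology f"
    unfolding metric_continuous_map[OF Met_TC.Metric_space_axioms]
  proof (intro conjI ballI allI impI)
    fix a and e :: real assume a: "a \<in> M" and e: "e > 0"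
    show "\<exists>\<delta>>0. \<forall>x. x \<in> M \<and> d a x < \<delta> \<longrightarrow> dist (f a) (f x) < e"
    proof (intro exI[of _ "e / K"] conjI allI impI)
      show "e / K > 0" using e K by simp
      fix x assume x: "x \<in> M \<and> d a x < e / K"
      have "dist (f a) (f x) \<le> K * d a x" using L[of a x] a x by (simp add: dist_real_def)
      also have "\<dots> < K * (e / K)" using x K by (intro mult_strict_left_mono) auto
      also have "\<dots> = e" using K by simp
      finally show "dist (f a) (f x) < e" .
    qed
  qed auto
  then show ?thesis by simp
qed

lemma cont_local:
  assumes "continuous_map mtopology euclideanreal f" "x \<in> M" "e > 0"
  shows "\<exists>\<delta>>0. \<forall>y. y \<in> M \<and> d x y < \<delta> \<longrightarrow> \<bar>f y - f x\<bar> < e"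
proof -
  have "continuous_map mtopology Met_TC.mtopology f" using assms(1) by simp
  then have "\<forall>a \<in> M. \<forall>\<epsilon>>0. \<exists>\<delta>>0.  (\<forall>y. y \<in> M \<and> d a y < \<delta> \<longrightarrow> dist (f a) (f y) < \<epsilon>)"
    unfolding metric_continuous_map[OF Met_TC.Metric_space_axioms] by blast
  then show ?thesis using assms(2,3) unfolding dist_real_def by (metis abs_minus_commute)
qed

end

lemma sep_imp_csp:
  assumes ms: "Metric_space M d" and X: "X = Metric_space.mtopology M d"
    and sep: "separable_space X"
  shows "countable_sup_property (cont_funs X)"
proof -
  interpret Metric_space M d by (rule ms)
  have tX: "topspace X = M" using X by simp
  obtain C where C: "countable C" "C \<subseteq> M" and cl: "mtopology closure_of C = M"
    using sep unfolding separable_space_def X by auto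
  have dense: "\<exists>c\<in>C. c \<in> mball x r" if "x \<in> M" "r > 0" for x r
  proof -
    have "x \<in> mtopology closure_of C" using cl that(1) by simp
    then show ?thesis unfolding metric_closure_of using that(2) by blast
  qed
  show ?thesis unfolding countable_sup_property_def
  proof (intro allI impI)
    fix S s assume SL: "S \<subseteq> cont_funs X \<and> S \<noteq> {}" and sup: "is_sup_in (cont_funs X) S s"
    have sup1: "s \<in> cont_funs X" and sup2: "\<forall>f\<in>S. f \<le> s"
      and sup3: "\<forall>u\<in>cont_funs X. (\<forall>f\<in>S. f \<le> u) \<longrightarrow> s \<le> u"
      using sup unfolding is_sup_in_def by auto
    define P where "P = (\<lambda>(c,r,q). \<exists>f\<in>S. \<exists>y\<in>M. d c y < r \<and> q < f y)"
    define g where "g = (\<lambda>i. SOME f. f \<in> S \<and> (case i of (c,r,q) \<Rightarrow> \<exists>y\<in>M. d c y < r \<and> q < f y))"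
    define I where "I = {i \<in> C \<times> \<rat> \<times> \<rat>. P i}"
    define T where "T = g ` I"
    have gI: "g i \<in> S \<and> (case i of (c,r,q) \<Rightarrow> \<exists>y\<in>M. d c y < r \<and> q < g i y)" if "i \<in> I" for i
    proof -
      obtain c r q where i: "i = (c,r,q)" by (cases i) auto
      have "P i" using that I_def by auto
      then have "\<exists>f. f \<in> S \<and> (case i of (c,r,q) \<Rightarrow> \<exists>y\<in>M. d c y < r \<and> q < f y)"
        unfolding P_def i by auto
      then show ?thesis unfolding g_def by (rule someI_ex)
    qed
    have TS: "T \<subseteq> S" using gI T_def by auto
    have cI: "countable I" unfolding I_def
      by (rule countable_subset[of _ "C \<times> \<rat> \<times> \<rat>"]) (auto intro: C countable_rat)
    have cT: "countable T" unfolding T_def using cI by simp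
    have "is_sup_in (cont_funs X) T s"
      unfolding is_sup_in_def
    proof (intro conjI ballI impI)
      show "s \<in> cont_funs X" by (rule sup1)
      show "f \<le> s" if "f \<in> T" for f using sup2 that TS by auto
      fix u assume uL: "u \<in> cont_funs X" and ub: "\<forall>f\<in>T. f \<le> u"
      have "\<forall>f\<in>S. f \<le> u"
      proof
        fix f assume fS: "f \<in> S"
        have fL: "f \<in> cont_funs X" using fS SL by auto
        show "f \<le> u"
        proof (rule le_funI)
          fix x
          show "f x \<le> u x"
          proof (cases "x \<in> M")
            case False then show ?thesis using fL uL unfolding cont_funs_def tX by auto
          next
            case xM: True
            show ?thesis
            proof (rule ccontr)
              assume "\<not> f x \<le> u x"
              then obtain q where q: "q \<in> \<rat>" "u x < q" "q < f x"
                using Rats_dense_in_real by (metis not_le)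
              define e where "e = min (f x - q) (q - u x)"
              have e: "e > 0" using q by (simp add: e_def)
              have fc: "continuous_map mtopology euclideanreal f"
                using fL unfolding cont_funs_def X by auto
              have uc: "continuous_map mtopology euclideanreal u"
                using uL unfolding cont_funs_def X by auto
              obtain d1 where d1: "d1 > 0" "\<And>y. y \<in> M \<Longrightarrow> d x y < d1 \<Longrightarrow> \<bar>f y - f x\<bar> < e"
                using cont_local[OF fc xM e] by auto
              obtain d2 where d2: "d2 > 0" "\<And>y. y \<in> M \<Longrightarrow> d x y < d2 \<Longrightarrow> \<bar>u y - u x\<bar> < e"
                using cont_local[OF uc xM e] by auto
              obtain r where r: "r \<in> \<rat>" "0 < r" "r < min d1 d2 / 2"
                using Rats_dense_in_real[of 0 "min d1 d2 / 2"] d1 d2 by auto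
              obtain c where c: "c \<in> C" "c \<in> mball x r" using dense[OF xM r(2)] by auto
              have cM: "c \<in> M" using c C by auto
              have dcx: "d c x < r" using c by (simp add: commute)
              have Pi: "(c,r,q) \<in> I" unfolding I_def P_def using c(1) r(1) q(1) fS xM dcx q(3) by auto
              then obtain y where y: "y \<in> M" "d c y < r" "q < g (c,r,q) y" using gI by fastforce
              have "g (c,r,q) \<in> T" using Pi T_def by auto
              then have "g (c,r,q) y \<le> u y" using ub by (auto simp: le_fun_def)
              moreover have "d x y < d2"
                using triangle[OF xM cM y(1)] dcx y(2) r(3) by (simp add: commute)
              then have "u y < u x + e" using d2(2)[OF y(1)] by auto
              ultimately show False using y(3) e_def by auto
            qed
          qed
        qed
      qed
      then show "s \<le> u" using sup3 uL by auto
    qed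
    then show "\<exists>T. T \<subseteq> S \<and> countable T \<and> is_sup_in (cont_funs X) T s"
      using TS cT by blast
  qed
qed

lemma csp_imp_sep:
  assumes ms: "Metric_space M d" and X: "X = Metric_space.mtopology M d"
    and csp: "countable_sup_property (cont_funs X)"
  shows "separable_space X"
proof (rule ccontr)
  interpret Metric_space M d by (rule ms)
  have tX: "topspace X = M" using X by simp
  assume ns: "\<not> separable_space X"
  have "\<exists>e>0. \<forall>C. countable C \<and> C \<subseteq> M \<longrightarrow> (\<exists>p\<in>M. \<forall>c\<in>C. e \<le> d c p)"
  proof (rule ccontr)
    assume "\<not> ?thesis"
    then have "\<forall>n. \<exists>C. countable C \<and> C \<subseteq> M \<and> (\<forall>p\<in>M. \<exists>c\<in>C. d c p < 1 / Suc n)"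
      by (metis not_le of_nat_0_less_iff zero_less_Suc zero_less_divide_1_iff)
    then obtain Cn where Cn: "\<And>n. countable (Cn n) \<and> Cn n \<subseteq> M \<and> (\<forall>p\<in>M. \<exists>c\<in>Cn n. d c p < 1 / Suc n)"
      by metis
    define D where "D = (\<Union>n. Cn n)"
    have "countable D" "D \<subseteq> M" using Cn D_def by auto
    moreover have "mtopology closure_of D = M"
      unfolding metric_closure_of
    proof (intro set_eqI iffI)
      fix x assume x: "x \<in> M"
      show "x \<in> {x \<in> M. \<forall>r>0. \<exists>y\<in>D. y \<in> mball x r}"
      proof (intro CollectI conjI allI impI x)
        fix r :: real assume r: "r > 0"
        obtain n where "inverse (real (Suc n)) < r"
          using reals_Archimedean[OF r] by blast
        then have n: "1 / Suc n < r" by (simp add: inverse_eq_divide)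
        obtain c where c: "c \<in> Cn n" "d c x < 1 / Suc n" using Cn x by blast
        have "c \<in> M" using Cn c by auto
        then have "c \<in> mball x r" using c n x by (simp add: commute)
        then show "\<exists>y\<in>D. y \<in> mball x r" using c D_def by auto
      qed
    qed auto
    ultimately have "separable_space X" unfolding separable_space_def X by auto
    then show False using ns by simp
  qed
  then obtain e where e: "e > 0" and far: "\<And>C. countable C \<Longrightarrow> C \<subseteq> M \<Longrightarrow> \<exists>p\<in>M. \<forall>c\<in>C. e \<le> d c p"
    by blast
  have "M \<noteq> {}" using far[of "{}"] by auto
  define b where "b = (\<lambda>a x. if x \<in> M then max 0 (1 - d x a / e) else 0)"
  define one where "one = (\<lambda>x::'a. if x \<in> M then 1 else (0::real))"
  have bL: "b a \<in> cont_funs X" if a: "a \<in> M" for a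
  proof -
    have "continuous_map mtopology euclideanreal (\<lambda>x. max 0 (1 - d x a / e))"
    proof (rule lip_cont[of "1 / e"])
      show "0 < 1 / e" using e by simp
      fix x y assume xy: "x \<in> M" "y \<in> M"
      have "\<bar>d x a - d y a\<bar> \<le> d x y"
        using triangle[OF xy(1) xy(2) a] triangle[OF xy(2) xy(1) a] commute[of x y] by auto
      moreover have "(1 - d x a / e) - (1 - d y a / e) = - ((d x a - d y a) / e)"
        by (simp add: diff_divide_distrib)
      ultimately have "\<bar>(1 - d x a / e) - (1 - d y a / e)\<bar> \<le> 1 / e * d x y"
        using e by (simp add: abs_divide divide_right_mono)
      then show "\<bar>max 0 (1 - d x a / e) - max 0 (1 - d y a / e)\<bar> \<le> 1 / e * d x y"
        by (smt (verit))
    qed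
    then have "continuous_map mtopology euclideanreal (b a)"
      by (rule continuous_map_eq) (simp add: b_def)
    then show ?thesis unfolding cont_funs_def X b_def by auto
  qed
  have oneL: "one \<in> cont_funs X"
  proof -
    have "continuous_map mtopology euclideanreal one"
      by (rule continuous_map_eq[OF continuous_map_const[THEN iffD2, of _ 1]]) (auto simp: one_def)
    then show ?thesis unfolding cont_funs_def X one_def by auto
  qed
  define S where "S = b ` M"
  have bone: "b a \<le> one" for a unfolding b_def one_def le_fun_def using e by auto
  have supS: "is_sup_in (cont_funs X) S one"
    unfolding is_sup_in_def
  proof (intro conjI ballI impI oneL)
    show "f \<le> one" if "f \<in> S" for f using that bone S_def by auto
    fix u assume uL: "u \<in> cont_funs X" and ub: "\<forall>f\<in>S. f \<le> u"
    show "one \<le> u"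
    proof (rule le_funI)
      fix x show "one x \<le> u x"
      proof (cases "x \<in> M")
        case True
        then have "b x x \<le> u x" using ub S_def by (auto simp: le_fun_def)
        then show ?thesis using True by (simp add: b_def one_def)
      next
        case False then show ?thesis using uL unfolding cont_funs_def tX one_def by auto
      qed
    qed
  qed
  have "S \<subseteq> cont_funs X \<and> S \<noteq> {}" using bL \<open>M \<noteq> {}\<close> S_def by auto
  then obtain T where T: "T \<subseteq> S" "countable T" "is_sup_in (cont_funs X) T one"
    using csp supS unfolding countable_sup_property_def by blast
  obtain C where C: "countable C" "C \<subseteq> M" "T = b ` C"
    using countable_subset_image[of T b M] T S_def by auto
  obtain p where p: "p \<in> M" "\<And>c. c \<in> C \<Longrightarrow> e \<le> d c p" using far[OF C(1,2)] by blast
  define u where "u = (\<lambda>x. if x \<in> M then min 1 (d x p / e) else 0)"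
  have uL: "u \<in> cont_funs X"
  proof -
    have "continuous_map mtopology euclideanreal (\<lambda>x. min 1 (d x p / e))"
    proof (rule lip_cont[of "1 / e"])
      show "0 < 1 / e" using e by simp
      fix x y assume xy: "x \<in> M" "y \<in> M"
      have "\<bar>d x p - d y p\<bar> \<le> d x y"
        using triangle[OF xy(1) xy(2) p(1)] triangle[OF xy(2) xy(1) p(1)] commute[of x y] by auto
      moreover have "d x p / e - d y p / e = (d x p - d y p) / e"
        by (simp add: diff_divide_distrib)
      ultimately have "\<bar>d x p / e - d y p / e\<bar> \<le> 1 / e * d x y"
        using e by (simp add: abs_divide divide_right_mono)
      then show "\<bar>min 1 (d x p / e) - min 1 (d y p / e)\<bar> \<le> 1 / e * d x y"
        by (smt (verit))
    qed
    then have "continuous_map mtopology euclideanreal u"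
      by (rule continuous_map_eq) (simp add: u_def)
    then show ?thesis unfolding cont_funs_def X u_def by auto
  qed
  have "\<forall>f\<in>T. f \<le> u"
  proof
    fix f assume "f \<in> T"
    then obtain c where c: "c \<in> C" "f = b c" using C by auto
    have cM: "c \<in> M" using c C by auto
    show "f \<le> u"
    proof (rule le_funI)
      fix x show "f x \<le> u x"
      proof (cases "x \<in> M")
        case True
        have "d c p \<le> d c x + d x p" using triangle[OF cM True p(1)] .
        then have "e \<le> d x c + d x p" using p(2)[OF c(1)] by (simp add: commute)
        then have "1 - d x c / e \<le> d x p / e" using e by (simp add: divide_simps)
        moreover have "0 \<le> d x p / e" "0 \<le> d x c / e" using e by auto
        ultimately show ?thesis using True c(2) by (simp add: b_def u_def)
      next
        case False then show ?thesis by (simp add: c(2) b_def u_def)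
      qed
    qed
  qed
  moreover have "\<forall>u\<in>cont_funs X. (\<forall>f\<in>T. f \<le> u) \<longrightarrow> one \<le> u"
    using T(3) unfolding is_sup_in_def by auto
  ultimately have "one \<le> u" using uL by auto
  then have "one p \<le> u p" by (simp add: le_fun_def)
  then show False using p(1) by (simp add: one_def u_def)
qed

theorem corollary4p9:
  fixes X :: "'a topology"
  assumes "metrizable_space X"
  shows "separable_space X \<longleftrightarrow> countable_sup_property (cont_funs X)"
proof -
  obtain M d where "Metric_space M d" "X = Metric_space.mtopology M d"
    using assms unfolding metrizable_space_def by blast
  then show ?thesis using sep_imp_csp csp_imp_sep by blast
qed

end
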